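(* Let $k\geqslant 1$ and $\Delta\geqslant 3$ be integers. Then there are only finitely many (finite, simple, connected) graphs $G$ of maximum degree $\Delta$ such that $g_k(G)<k-2$.
   Context: For integers $k\geqslant 1$ and $\Delta\geqslant 3$, let $f(k,\Delta)=\Delta\sum_{i=0}^{k-1}(\Delta-1)^i$ (the number of non-root nodes of a $\Delta$-ary tree of height $k$). For a graph $G$, its $k$-th power $G^k$ is the graph on $V(G)$ in which two distinct vertices are adjacent iff their distance in $G$ is at most $k$. $\chi$ denotes the chromatic number and $\Delta(G)$ the maximum degree of $G$. The $k$-gap of $G$ is $g_k(G)=f(k,\Delta(G))+1-\chi(G^k)$. *)

theory Defs
  imports Main
begin

definition simple_graph :: "'a set \<Rightarrow> ('a \<Rightarrow> 'a \<Rightarrow> bool) \<Rightarrow> bool" where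
  "simple_graph V E \<longleftrightarrow> finite V \<and> (\<forall>u v. E u v \<longrightarrow> u \<in> V \<and> v \<in> V)
     \<and> (\<forall>u v. E u v \<longrightarrow> E v u) \<and> (\<forall>v. \<not> E v v)"

text \<open>A walk from u to v given as the list of its vertices; its length is length xs - 1.\<close>
definition walk_betw :: "'a set \<Rightarrow> ('a \<Rightarrow> 'a \<Rightarrow> bool) \<Rightarrow> 'a \<Rightarrow> 'a list \<Rightarrow> 'a \<Rightarrow> bool" where
  "walk_betw V E u xs v \<longleftrightarrow> xs \<noteq> [] \<and> hd xs = u \<and> last xs = v \<and> set xs \<subseteq> V
     \<and> (\<forall>i. Suc i < length xs \<longrightarrow> E (xs ! i) (xs ! Suc i))"

definition connected_graph :: "'a set \<Rightarrow> ('a \<Rightarrow> 'a \<Rightarrow> bool) \<Rightarrow> bool" where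
  "connected_graph V E \<longleftrightarrow> V \<noteq> {} \<and> (\<forall>u\<in>V. \<forall>v\<in>V. \<exists>xs. walk_betw V E u xs v)"

definition degree :: "'a set \<Rightarrow> ('a \<Rightarrow> 'a \<Rightarrow> bool) \<Rightarrow> 'a \<Rightarrow> nat" where
  "degree V E v = card {u \<in> V. E v u}"

definition max_degree :: "'a set \<Rightarrow> ('a \<Rightarrow> 'a \<Rightarrow> bool) \<Rightarrow> nat" where
  "max_degree V E = Max (degree V E ` V)"

definition dist_le :: "'a set \<Rightarrow> ('a \<Rightarrow> 'a \<Rightarrow> bool) \<Rightarrow> nat \<Rightarrow> 'a \<Rightarrow> 'a \<Rightarrow> bool" where
  "dist_le V E k u v \<longleftrightarrow> (\<exists>xs. walk_betw V E u xs v \<and> length xs - 1 \<le> k)"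

definition graph_power :: "'a set \<Rightarrow> ('a \<Rightarrow> 'a \<Rightarrow> bool) \<Rightarrow> nat \<Rightarrow> 'a \<Rightarrow> 'a \<Rightarrow> bool" where
  "graph_power V E k u v \<longleftrightarrow> u \<noteq> v \<and> dist_le V E k u v"

definition colourable :: "'a set \<Rightarrow> ('a \<Rightarrow> 'a \<Rightarrow> bool) \<Rightarrow> nat \<Rightarrow> bool" where
  "colourable V E c \<longleftrightarrow> (\<exists>col :: 'a \<Rightarrow> nat. (\<forall>v\<in>V. col v < c)
     \<and> (\<forall>u\<in>V. \<forall>v\<in>V. E u v \<longrightarrow> col u \<noteq> col v))"

definition chromatic_number :: "'a set \<Rightarrow> ('a \<Rightarrow> 'a \<Rightarrow> bool) \<Rightarrow> nat" where
  "chromatic_number V E = (LEAST c. colourable V E c)"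

definition f_tree :: "nat \<Rightarrow> nat \<Rightarrow> nat" where
  "f_tree k D = D * (\<Sum>i<k. (D - 1) ^ i)"

definition k_gap :: "nat \<Rightarrow> 'a set \<Rightarrow> ('a \<Rightarrow> 'a \<Rightarrow> bool) \<Rightarrow> int" where
  "k_gap k V E = int (f_tree k (max_degree V E)) + 1 - int (chromatic_number V (graph_power V E k))"

end

theory Submission
  imports Defs
begin

definition iswalk :: "('a \<Rightarrow> 'a \<Rightarrow> bool) \<Rightarrow> 'a list \<Rightarrow> bool" where
  "iswalk E xs \<longleftrightarrow> (\<forall>j. Suc j < length xs \<longrightarrow> E (xs ! j) (xs ! Suc j))"

definition nbt :: "'a list \<Rightarrow> bool" where
  "nbt xs \<longleftrightarrow> (\<forall>j. Suc (Suc j) < length xs \<longrightarrow> xs ! j \<noteq> xs ! Suc (Suc j))"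

definition nbw :: "'a set \<Rightarrow> ('a \<Rightarrow> 'a \<Rightarrow> bool) \<Rightarrow> 'a \<Rightarrow> nat \<Rightarrow> 'a list set" where
  "nbw V E v n = {xs. length xs = Suc n \<and> hd xs = v \<and> set xs \<subseteq> V \<and> iswalk E xs \<and> nbt xs}"

locale G =
  fixes V :: "'a set" and E :: "'a \<Rightarrow> 'a \<Rightarrow> bool"
  assumes sg: "simple_graph V E"
begin

lemma finV: "finite V" using sg by (simp add: simple_graph_def)
lemma EV: "E u v \<Longrightarrow> u \<in> V \<and> v \<in> V" using sg by (simp add: simple_graph_def)
lemma Esym: "E u v \<Longrightarrow> E v u" using sg by (simp add: simple_graph_def)
lemma Eirr: "\<not> E v v" using sg by (simp add: simple_graph_def)

abbreviation "dl \<equiv> dist_le V E"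

lemma dl_refl: "u \<in> V \<Longrightarrow> dl n u u"
  unfolding dist_le_def walk_betw_def by (rule exI[of _ "[u]"]) auto

lemma dl_mono: "dl n u v \<Longrightarrow> n \<le> m \<Longrightarrow> dl m u v"
  unfolding dist_le_def by auto

lemma dl_V: "dl n u v \<Longrightarrow> u \<in> V \<and> v \<in> V"
  unfolding dist_le_def walk_betw_def
  by (metis empty_subsetI hd_in_set insert_subset last_in_set subset_iff)

lemma dl_0: "dl 0 u v \<Longrightarrow> u = v"
proof -
  assume "dl 0 u v"
  then obtain xs where "walk_betw V E u xs v" "length xs - 1 \<le> 0" unfolding dist_le_def by auto
  then obtain a where "xs = [a]" unfolding walk_betw_def by (cases xs) auto
  then show ?thesis using \<open>walk_betw V E u xs v\<close> unfolding walk_betw_def by auto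
qed

lemma dl_cons: "E u w \<Longrightarrow> dl n w v \<Longrightarrow> dl (Suc n) u v"
proof -
  assume e: "E u w" and "dl n w v"
  then obtain xs where xs: "walk_betw V E w xs v" "length xs - 1 \<le> n" unfolding dist_le_def by auto
  have "walk_betw V E u (u # xs) v"
    using xs(1) e EV unfolding walk_betw_def
    apply (intro conjI)
    apply simp_all
    apply (intro allI impI)
    subgoal for i by (cases i) (auto simp: hd_conv_nth)
    done
  moreover have "length (u # xs) - 1 \<le> Suc n" using xs by auto
  ultimately show ?thesis unfolding dist_le_def by blast
qed

lemma dl_Suc: "dl (Suc n) u v \<Longrightarrow> u = v \<or> (\<exists>w. E u w \<and> dl n w v)"
proof -
  assume "dl (Suc n) u v"
  then obtain xs where xs: "walk_betw V E u xs v" "length xs - 1 \<le> Suc n" unfolding dist_le_def by auto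
  show ?thesis
  proof (cases xs)
    case Nil then show ?thesis using xs by (auto simp: walk_betw_def)
  next
    case (Cons a ys)
    show ?thesis
    proof (cases ys)
      case Nil then show ?thesis using xs Cons by (auto simp: walk_betw_def)
    next
      case (Cons b zs)
      have ab: "a = u" using xs \<open>xs = a # ys\<close> by (auto simp: walk_betw_def)
      have w: "\<forall>i. Suc i < length xs \<longrightarrow> E (xs ! i) (xs ! Suc i)" "last xs = v" "set xs \<subseteq> V"
        using xs(1) unfolding walk_betw_def by auto
      have "E a b" using w(1)[rule_format, of 0] \<open>xs = a # ys\<close> Cons by simp
      moreover have "walk_betw V E b ys v"
        unfolding walk_betw_def
      proof (intro conjI allI impI)
        fix i assume "Suc i < length ys"
        then show "E (ys ! i) (ys ! Suc i)" using w(1)[rule_format, of "Suc i"] \<open>xs = a # ys\<close> by simp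
      qed (use w \<open>xs = a # ys\<close> Cons in auto)
      moreover have "length ys - 1 \<le> n" using xs(2) \<open>xs = a # ys\<close> Cons by auto
      ultimately show ?thesis using ab unfolding dist_le_def by blast
    qed
  qed
qed

lemma dl_trans: "dl a u v \<Longrightarrow> dl b v w \<Longrightarrow> dl (a + b) u w"
proof (induction a arbitrary: u)
  case 0
  then show ?case using dl_0 by auto
next
  case (Suc a)
  from dl_Suc[OF Suc.prems(1)] show ?case
  proof
    assume "u = v" then show ?thesis using Suc.prems dl_mono by auto
  next
    assume "\<exists>x. E u x \<and> dl a x v"
    then obtain x where "E u x" "dl a x v" by auto
    then show ?thesis using Suc.IH[of x] Suc.prems dl_cons by auto
  qed
qed

lemma dl_edge: "E u v \<Longrightarrow> dl 1 u v"
  using dl_cons[of u v 0 v] dl_refl EV by auto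

lemma dl_sym: "dl n u v \<Longrightarrow> dl n v u"
proof (induction n arbitrary: u)
  case 0 then show ?case using dl_0 dl_V by (metis)
next
  case (Suc n)
  from dl_Suc[OF Suc.prems] show ?case
  proof
    assume "u = v" then show ?thesis using Suc.prems dl_V dl_refl by metis
  next
    assume "\<exists>x. E u x \<and> dl n x v"
    then obtain x where "E u x" "dl n x v" by auto
    then have "dl n v x" "dl 1 x u" using Suc.IH dl_edge Esym by auto
    then show ?thesis using dl_trans by fastforce
  qed
qed

lemma dl_walk_aux: "iswalk E xs \<Longrightarrow> set xs \<subseteq> V \<Longrightarrow> i + m < length xs \<Longrightarrow> dl m (xs ! i) (xs ! (i + m))"
proof (induction m arbitrary: i)
  case 0 then show ?case using dl_refl by (simp add: subset_iff)
next
  case (Suc m)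
  then have "E (xs ! i) (xs ! Suc i)" unfolding iswalk_def by auto
  moreover have "dl m (xs ! Suc i) (xs ! (Suc i + m))" using Suc.IH[of "Suc i"] Suc.prems by auto
  ultimately show ?case using dl_cons by simp
qed

lemma dl_walk: "iswalk E xs \<Longrightarrow> set xs \<subseteq> V \<Longrightarrow> j < length xs \<Longrightarrow> i \<le> j \<Longrightarrow> dl (j - i) (xs ! i) (xs ! j)"
  using dl_walk_aux[of xs i "j - i"] by simp

end

definition sd :: "'a set \<Rightarrow> ('a \<Rightarrow> 'a \<Rightarrow> bool) \<Rightarrow> 'a set \<Rightarrow> 'a \<Rightarrow> nat" where
  "sd V E S x = (LEAST n. \<exists>z\<in>S. dist_le V E n x z)"

locale CG = G +
  assumes conn: "connected_graph V E"
begin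

lemma conn_dl: "u \<in> V \<Longrightarrow> v \<in> V \<Longrightarrow> \<exists>n. dl n u v"
  using conn unfolding connected_graph_def dist_le_def by blast

lemma sd_ex: "x \<in> V \<Longrightarrow> S \<subseteq> V \<Longrightarrow> S \<noteq> {} \<Longrightarrow> \<exists>z\<in>S. dl (sd V E S x) x z"
proof -
  assume a: "x \<in> V" "S \<subseteq> V" "S \<noteq> {}"
  then obtain z where "z \<in> S" by auto
  then obtain n where "dl n x z" using conn_dl a by blast
  then have "\<exists>n. \<exists>z\<in>S. dl n x z" using \<open>z \<in> S\<close> by blast
  then show ?thesis unfolding sd_def by (rule LeastI_ex)
qed

lemma sd_le: "z \<in> S \<Longrightarrow> dl n x z \<Longrightarrow> sd V E S x \<le> n"
  unfolding sd_def by (rule Least_le) blast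

lemma sd_0: "x \<in> V \<Longrightarrow> S \<subseteq> V \<Longrightarrow> S \<noteq> {} \<Longrightarrow> sd V E S x = 0 \<longleftrightarrow> x \<in> S"
proof
  assume a: "x \<in> V" "S \<subseteq> V" "S \<noteq> {}" "sd V E S x = 0"
  then show "x \<in> S" using sd_ex[of x S] dl_0 by auto
next
  assume a: "x \<in> V" "x \<in> S"
  then show "sd V E S x = 0" using sd_le[of x S 0 x] dl_refl by auto
qed

lemma sd_edge: "E x y \<Longrightarrow> S \<subseteq> V \<Longrightarrow> S \<noteq> {} \<Longrightarrow> sd V E S x \<le> Suc (sd V E S y)"
proof -
  assume a: "E x y" "S \<subseteq> V" "S \<noteq> {}"
  then obtain z where "z \<in> S" "dl (sd V E S y) y z" using sd_ex[of y S] EV by blast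
  then have "dl (Suc (sd V E S y)) x z" using dl_cons a by blast
  then show ?thesis using sd_le \<open>z \<in> S\<close> by blast
qed

lemma sd_dl: "dl n x y \<Longrightarrow> S \<subseteq> V \<Longrightarrow> S \<noteq> {} \<Longrightarrow> sd V E S x \<le> n + sd V E S y"
proof -
  assume a: "dl n x y" "S \<subseteq> V" "S \<noteq> {}"
  then obtain z where "z \<in> S" "dl (sd V E S y) y z" using sd_ex[of y S] dl_V by blast
  then have "dl (n + sd V E S y) x z" using dl_trans a by blast
  then show ?thesis using sd_le \<open>z \<in> S\<close> by blast
qed

lemma sd_step: "x \<in> V \<Longrightarrow> S \<subseteq> V \<Longrightarrow> S \<noteq> {} \<Longrightarrow> sd V E S x = Suc n \<Longrightarrow> \<exists>y. E x y \<and> sd V E S y = n"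
proof -
  assume a: "x \<in> V" "S \<subseteq> V" "S \<noteq> {}" "sd V E S x = Suc n"
  then obtain z where z: "z \<in> S" "dl (Suc n) x z" using sd_ex[of x S] by auto
  have "x \<notin> S" using a sd_0[of x S] by simp
  then obtain y where y: "E x y" "dl n y z" using dl_Suc[OF z(2)] z(1) by auto
  have "sd V E S y \<le> n" using sd_le z(1) y(2) by blast
  moreover have "Suc n \<le> Suc (sd V E S y)" using sd_edge[OF y(1) a(2,3)] a(4) by simp
  ultimately show ?thesis using y by auto
qed

lemma geo_walk: "x \<in> V \<Longrightarrow> S \<subseteq> V \<Longrightarrow> S \<noteq> {} \<Longrightarrow> sd V E S x = n \<Longrightarrow>
   \<exists>xs. length xs = Suc n \<and> hd xs = x \<and> set xs \<subseteq> V \<and> iswalk E xs \<and> (\<forall>s\<le>n. sd V E S (xs ! s) = n - s)"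
proof (induction n arbitrary: x)
  case 0
  then show ?case by (intro exI[of _ "[x]"]) (auto simp: iswalk_def)
next
  case (Suc n)
  then obtain y where y: "E x y" "sd V E S y = n" using sd_step by blast
  then obtain ys where ys: "length ys = Suc n" "hd ys = y" "set ys \<subseteq> V" "iswalk E ys"
      "\<forall>s\<le>n. sd V E S (ys ! s) = n - s" using Suc EV by blast
  have "iswalk E (x # ys)" unfolding iswalk_def
  proof (intro allI impI)
    fix j assume "Suc j < length (x # ys)"
    then show "E ((x # ys) ! j) ((x # ys) ! Suc j)"
    proof (cases j)
      case 0
      have "ys \<noteq> []" using ys by auto
      then have "hd ys = ys ! 0" by (simp add: hd_conv_nth)
      then show ?thesis using 0 ys y(1) by simp
    next
      case (Suc j')
      then show ?thesis using ys \<open>Suc j < length (x # ys)\<close> unfolding iswalk_def by auto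
    qed
  qed
  moreover have "\<forall>s\<le>Suc n. sd V E S ((x # ys) ! s) = Suc n - s"
  proof (intro allI impI)
    fix s assume "s \<le> Suc n"
    then show "sd V E S ((x # ys) ! s) = Suc n - s" using ys Suc.prems by (cases s) auto
  qed
  ultimately show ?case using ys Suc.prems by (intro exI[of _ "x # ys"]) auto
qed

lemma geo_nbw: "length xs = Suc n \<Longrightarrow> hd xs = x \<Longrightarrow> set xs \<subseteq> V \<Longrightarrow> iswalk E xs \<Longrightarrow>
   (\<forall>s\<le>n. sd V E S (xs ! s) = n - s) \<Longrightarrow> xs \<in> nbw V E x n"
  unfolding nbw_def nbt_def
proof (intro CollectI conjI allI impI; assumption?)
  fix j assume a: "Suc (Suc j) < length xs" "\<forall>s\<le>n. sd V E S (xs ! s) = n - s" "length xs = Suc n"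
  have j2: "Suc (Suc j) \<le> n" using a(1,3) by simp
  have 1: "sd V E S (xs ! j) = n - j" using a(2) j2 by simp
  have 2: "sd V E S (xs ! Suc (Suc j)) = n - Suc (Suc j)" using a(2) j2 by blast
  show "xs ! j \<noteq> xs ! Suc (Suc j)"
  proof
    assume "xs ! j = xs ! Suc (Suc j)"
    then have "n - j = n - Suc (Suc j)" using 1 2 by simp
    then show False using j2 by simp
  qed
qed

end

locale CGD = CG +
  fixes D :: nat
  assumes degD: "\<And>x. x \<in> V \<Longrightarrow> degree V E x \<le> D" and D3: "D \<ge> 3"
begin

definition nbrs where "nbrs x = {y \<in> V. E x y}"

lemma fin_nbrs: "finite (nbrs x)" using finV unfolding nbrs_def by auto

lemma deg_nbrs: "degree V E x = card (nbrs x)" unfolding degree_def nbrs_def by simp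

lemma nbw_fin: "finite (nbw V E v n)"
proof -
  have "nbw V E v n \<subseteq> {xs. set xs \<subseteq> V \<and> length xs = Suc n}" unfolding nbw_def by auto
  then show ?thesis using finite_lists_length_eq[OF finV] finite_subset by blast
qed

lemma nbw_last: "xs \<in> nbw V E v n \<Longrightarrow> last xs = xs ! n"
proof -
  assume "xs \<in> nbw V E v n"
  then have l: "length xs = Suc n" unfolding nbw_def by auto
  then have "xs \<noteq> []" by auto
  then show ?thesis using l by (simp add: last_conv_nth)
qed

lemma nbw_1: "v \<in> V \<Longrightarrow> card (nbw V E v 1) \<le> degree V E v"
proof -
  assume v: "v \<in> V"
  have "nbw V E v 1 \<subseteq> (\<lambda>y. [v, y]) ` nbrs v"
  proof
    fix xs assume xs: "xs \<in> nbw V E v 1"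
    then obtain a b where ab: "xs = [a, b]" unfolding nbw_def
      by (auto simp: length_Suc_conv)
    then have "a = v" "E a b" "b \<in> V" using xs unfolding nbw_def iswalk_def by auto
    then show "xs \<in> (\<lambda>y. [v, y]) ` nbrs v" using ab unfolding nbrs_def by auto
  qed
  then have "card (nbw V E v 1) \<le> card ((\<lambda>y. [v, y]) ` nbrs v)"
    using fin_nbrs by (intro card_mono) auto
  also have "\<dots> \<le> card (nbrs v)" by (rule card_image_le[OF fin_nbrs])
  finally show ?thesis by (simp add: deg_nbrs)
qed

lemma nbw_Suc_decomp:
  assumes xs: "xs \<in> nbw V E v (Suc n)" and n: "n \<ge> 1"
  shows "butlast xs \<in> nbw V E v n \<and> xs = butlast xs @ [last xs] \<and>
         last xs \<in> nbrs (last (butlast xs)) - {butlast xs ! (n - 1)}"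
proof -
  let ?ys = "butlast xs"
  have len: "length xs = Suc (Suc n)" and hd: "hd xs = v" and sV: "set xs \<subseteq> V"
    and w: "\<And>j. Suc j < length xs \<Longrightarrow> E (xs ! j) (xs ! Suc j)"
    and nb: "\<And>j. Suc (Suc j) < length xs \<Longrightarrow> xs ! j \<noteq> xs ! Suc (Suc j)"
    using xs unfolding nbw_def iswalk_def nbt_def by auto
  have lys: "length ?ys = Suc n" using len by simp
  have nth: "\<And>j. j < Suc n \<Longrightarrow> ?ys ! j = xs ! j" using len by (simp add: nth_butlast)
  have "?ys \<noteq> []"
  proof
    assume "?ys = []" then have "length ?ys = 0" by simp
    then show False using lys by simp
  qed
  have "xs \<noteq> []" using len by auto
  have "hd ?ys = ?ys ! 0" using \<open>?ys \<noteq> []\<close> by (rule hd_conv_nth)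
  also have "\<dots> = xs ! 0" using nth[of 0] by simp
  also have "\<dots> = hd xs" using \<open>xs \<noteq> []\<close> by (rule hd_conv_nth[symmetric])
  finally have "hd ?ys = v" using hd by simp
  moreover have "set ?ys \<subseteq> V" using sV by (meson in_set_butlastD subset_iff)
  moreover have "iswalk E ?ys" unfolding iswalk_def using lys nth w len by auto
  moreover have "nbt ?ys" unfolding nbt_def using lys nth nb len by auto
  ultimately have 1: "?ys \<in> nbw V E v n" using lys unfolding nbw_def by auto
  have ne: "xs \<noteq> []" using len by auto
  have lst: "last xs = xs ! Suc n" using len ne by (simp add: last_conv_nth)
  have lys2: "last ?ys = xs ! n" using nth[of n] lys \<open>?ys \<noteq> []\<close> by (simp add: last_conv_nth)
  have "last xs \<in> nbrs (last ?ys)" using w[of n] len lst lys2 sV unfolding nbrs_def by auto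
  moreover have "last xs \<noteq> ?ys ! (n - 1)" using nb[of "n - 1"] nth[of "n - 1"] n len lst by auto
  ultimately show ?thesis using 1 ne by simp
qed

definition dfc where "dfc v n = (\<Sum>xs\<in>nbw V E v n. D - degree V E (last xs))"

lemma nbw_step:
  assumes n: "n \<ge> 1"
  shows "card (nbw V E v (Suc n)) + dfc v n \<le> (D - 1) * card (nbw V E v n)"
proof -
  let ?N = "nbw V E v n"
  let ?A = "\<lambda>xs. (\<lambda>y. xs @ [y]) ` (nbrs (last xs) - {xs ! (n - 1)})"
  have sub: "nbw V E v (Suc n) \<subseteq> (\<Union>xs\<in>?N. ?A xs)"
  proof
    fix xs assume "xs \<in> nbw V E v (Suc n)"
    from nbw_Suc_decomp[OF this n] show "xs \<in> (\<Union>xs\<in>?N. ?A xs)" by blast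
  qed
  have cA: "card (?A xs) \<le> degree V E (last xs) - 1" if xs: "xs \<in> ?N" for xs
  proof -
    have len: "length xs = Suc n" and w: "iswalk E xs" using xs unfolding nbw_def by auto
    have "Suc (n - 1) < length xs" using len n by simp
    then have "E (xs ! (n - 1)) (xs ! Suc (n - 1))" using w unfolding iswalk_def by blast
    then have "E (xs ! (n - 1)) (xs ! n)" using n by simp
    then have "xs ! (n - 1) \<in> nbrs (last xs)" using nbw_last[OF xs] Esym EV unfolding nbrs_def by auto
    then have "card (nbrs (last xs) - {xs ! (n - 1)}) = degree V E (last xs) - 1"
      using fin_nbrs by (simp add: deg_nbrs)
    moreover have "card (?A xs) \<le> card (nbrs (last xs) - {xs ! (n - 1)})"
      using fin_nbrs by (intro card_image_le) auto
    ultimately show ?thesis by simp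
  qed
  have dpos: "degree V E (last xs) \<ge> 1 \<and> degree V E (last xs) \<le> D" if xs: "xs \<in> ?N" for xs
  proof -
    have len: "length xs = Suc n" and w: "iswalk E xs" and sV: "set xs \<subseteq> V" using xs unfolding nbw_def by auto
    have "Suc (n - 1) < length xs" using len n by simp
    then have "E (xs ! (n - 1)) (xs ! Suc (n - 1))" using w unfolding iswalk_def by blast
    then have "E (xs ! (n - 1)) (xs ! n)" using n by simp
    then have "xs ! (n - 1) \<in> nbrs (last xs)" using nbw_last[OF xs] Esym EV unfolding nbrs_def by auto
    then have "card (nbrs (last xs)) \<noteq> 0" using fin_nbrs by auto
    then have "card (nbrs (last xs)) \<ge> 1" by simp
    have "xs \<noteq> []" using len by auto
    then have "last xs \<in> V" using sV by auto
    then show ?thesis using degD \<open>card (nbrs (last xs)) \<ge> 1\<close> by (simp add: deg_nbrs)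
  qed
  have "card (nbw V E v (Suc n)) \<le> card (\<Union>xs\<in>?N. ?A xs)"
    using sub nbw_fin fin_nbrs by (intro card_mono) auto
  also have "\<dots> \<le> (\<Sum>xs\<in>?N. card (?A xs))" by (rule card_UN_le[OF nbw_fin])
  also have "\<dots> \<le> (\<Sum>xs\<in>?N. degree V E (last xs) - 1)" by (rule sum_mono) (rule cA)
  finally have "card (nbw V E v (Suc n)) + dfc v n \<le>
     (\<Sum>xs\<in>?N. degree V E (last xs) - 1) + (\<Sum>xs\<in>?N. D - degree V E (last xs))"
    unfolding dfc_def by simp
  also have "\<dots> = (\<Sum>xs\<in>?N. D - 1)"
    unfolding sum.distrib[symmetric] by (rule sum.cong) (use dpos in auto)
  also have "\<dots> = (D - 1) * card ?N" by simp
  finally show ?thesis .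
qed

lemma nbw_bound:
  assumes v: "v \<in> V" and n: "n \<ge> 1"
  shows "card (nbw V E v n) + (\<Sum>j\<in>{1..<n}. dfc v j) \<le> D * (D - 1) ^ (n - 1)"
  using n
proof (induction n rule: dec_induct)
  case base
  then show ?case using nbw_1[OF v] degD[OF v] by simp
next
  case (step n)
  have "card (nbw V E v (Suc n)) + (\<Sum>j\<in>{1..<Suc n}. dfc v j)
      = (card (nbw V E v (Suc n)) + dfc v n) + (\<Sum>j\<in>{1..<n}. dfc v j)"
    using step.hyps by (simp add: sum.atLeastLessThan_Suc)
  also have "\<dots> \<le> (D - 1) * card (nbw V E v n) + (\<Sum>j\<in>{1..<n}. dfc v j)"
    using nbw_step[OF step.hyps(1)] by simp
  also have "\<dots> \<le> (D - 1) * (card (nbw V E v n) + (\<Sum>j\<in>{1..<n}. dfc v j))"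
  proof -
    have "(\<Sum>j\<in>{1..<n}. dfc v j) \<le> (D - 1) * (\<Sum>j\<in>{1..<n}. dfc v j)"
    proof -
      have "1 \<le> D - 1" using D3 by linarith
      from mult_le_mono1[OF this, of "\<Sum>j\<in>{1..<n}. dfc v j"] show ?thesis by simp
    qed
    then show ?thesis by (simp add: add_mult_distrib2)
  qed
  also have "\<dots> \<le> (D - 1) * (D * (D - 1) ^ (n - 1))"
    using step.IH by (intro mult_le_mono2)
  also have "\<dots> = D * (D - 1) ^ (Suc n - 1)"
    using step.hyps by (cases n) (auto simp: algebra_simps)
  finally show ?case .
qed

lemma f_tree_alt: "k \<ge> 1 \<Longrightarrow> f_tree k D = (\<Sum>j\<in>{1..k}. D * (D - 1) ^ (j - 1))"
proof -
  assume "k \<ge> 1"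
  have "(\<Sum>j\<in>{1..k}. D * (D - 1) ^ (j - 1)) = (\<Sum>i<k. D * (D - 1) ^ i)"
  proof (rule sum.reindex_bij_witness[of _ "\<lambda>i. i + 1" "\<lambda>j. j - 1"]) qed auto
  then show ?thesis unfolding f_tree_def by (simp add: sum_distrib_left)
qed

lemma total_bound:
  assumes v: "v \<in> V" and k: "k \<ge> 1"
  shows "(\<Sum>j\<in>{1..k}. card (nbw V E v j)) + (\<Sum>j\<in>{1..<k}. dfc v j) \<le> f_tree k D"
proof -
  have "{1..k} = insert k {1..<k}" using k by auto
  then have "(\<Sum>j\<in>{1..k}. card (nbw V E v j)) = card (nbw V E v k) + (\<Sum>j\<in>{1..<k}. card (nbw V E v j))"
    by simp
  moreover have "(\<Sum>j\<in>{1..k}. D * (D - 1) ^ (j - 1)) = D * (D - 1) ^ (k - 1) + (\<Sum>j\<in>{1..<k}. D * (D - 1) ^ (j - 1))"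
    using \<open>{1..k} = insert k {1..<k}\<close> by simp
  moreover have "(\<Sum>j\<in>{1..<k}. card (nbw V E v j)) \<le> (\<Sum>j\<in>{1..<k}. D * (D - 1) ^ (j - 1))"
  proof (rule sum_mono)
    fix j assume "j \<in> {1..<k}"
    then have "j \<ge> 1" by simp
    then show "card (nbw V E v j) \<le> D * (D - 1) ^ (j - 1)" using nbw_bound[OF v, of j] by simp
  qed
  ultimately show ?thesis using nbw_bound[OF v k] f_tree_alt[OF k] by simp
qed

end

context CGD begin

lemma exists_geo:
  assumes v: "v \<in> V" and u: "u \<in> V" "u \<noteq> v" "dl k v u"
  shows "\<exists>xs\<in>(\<Union>j\<in>{1..k}. nbw V E v j). last xs = u"
proof -
  define m where "m = sd V E {u} v"
  obtain xs where xs: "length xs = Suc m" "hd xs = v" "set xs \<subseteq> V" "iswalk E xs"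
    "\<forall>s\<le>m. sd V E {u} (xs ! s) = m - s"
    using geo_walk[OF v, of "{u}" m] u m_def by auto
  have nb: "xs \<in> nbw V E v m" using geo_nbw[OF xs(1-4) xs(5)] .
  have "m \<le> k" unfolding m_def using sd_le[of u "{u}" k v] u by auto
  moreover have "m \<noteq> 0" unfolding m_def using sd_0[OF v, of "{u}"] u by auto
  moreover have "last xs = u"
  proof -
    have "xs ! m \<in> V" using xs(1,3) by (simp add: subset_iff)
    moreover have "sd V E {u} (xs ! m) = 0" using xs(5) by simp
    ultimately have "xs ! m \<in> {u}" using sd_0[of "xs ! m" "{u}"] u by auto
    then show ?thesis using nbw_last[OF nb] by simp
  qed
  ultimately show ?thesis using nb by auto
qed

lemma count:
  assumes v: "v \<in> V" and k: "k \<ge> 1"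
    and F1: "F1 \<subseteq> (\<Union>j\<in>{1..k}. nbw V E v j)" "\<forall>xs\<in>F1. last xs \<in> L"
    and F2: "F2 \<subseteq> (\<Union>j\<in>{1..<k}. nbw V E v j)" "\<forall>xs\<in>F2. degree V E (last xs) < D"
  shows "card {u\<in>V. u \<noteq> v \<and> dl k v u \<and> u \<notin> L} + card F1 + card F2 \<le> f_tree k D"
proof -
  define WK where "WK = (\<Union>j\<in>{1..k}. nbw V E v j)"
  define N' where "N' = {u\<in>V. u \<noteq> v \<and> dl k v u \<and> u \<notin> L}"
  have finWK: "finite WK" unfolding WK_def using nbw_fin by auto
  define g where "g u = (SOME xs. xs \<in> WK \<and> last xs = u)" for u
  have g: "g u \<in> WK \<and> last (g u) = u" if "u \<in> N'" for u
  proof -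
    have "\<exists>xs. xs \<in> WK \<and> last xs = u" using exists_geo[OF v, of u k] that unfolding N'_def WK_def by auto
    then show ?thesis unfolding g_def by (rule someI_ex)
  qed
  have inj: "inj_on g N'"
  proof (rule inj_onI)
    fix s t assume "s \<in> N'" "t \<in> N'" "g s = g t"
    have "last (g s) = s" using g[OF \<open>s \<in> N'\<close>] by (rule conjunct2)
    moreover have "last (g t) = t" using g[OF \<open>t \<in> N'\<close>] by (rule conjunct2)
    ultimately show "s = t" using \<open>g s = g t\<close> by metis
  qed
  have disj: "g ` N' \<inter> F1 = {}" using g F1(2) unfolding N'_def by auto
  have sub: "g ` N' \<union> F1 \<subseteq> WK" using g F1(1) unfolding WK_def by auto
  have finF1: "finite F1" using finite_subset[OF F1(1)] finWK unfolding WK_def by blast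
  have "card N' + card F1 = card (g ` N') + card F1" using card_image[OF inj] by simp
  also have "\<dots> = card (g ` N' \<union> F1)"
  proof -
    have "g ` N' \<subseteq> WK" using sub by auto
    then have "finite (g ` N')" using finite_subset[OF _ finWK] by blast
    then show ?thesis using card_Un_disjoint[OF _ finF1 disj] by simp
  qed
  also have "\<dots> \<le> card WK" using sub finWK by (rule card_mono[rotated])
  also have "\<dots> \<le> (\<Sum>j\<in>{1..k}. card (nbw V E v j))" unfolding WK_def by (rule card_UN_le) simp
  finally have A: "card N' + card F1 \<le> (\<Sum>j\<in>{1..k}. card (nbw V E v j))" .
  have B: "card {xs\<in>nbw V E v j. degree V E (last xs) < D} \<le> dfc v j" for j
  proof -
    let ?A = "{xs\<in>nbw V E v j. degree V E (last xs) < D}"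
    have "card ?A = (\<Sum>xs\<in>?A. 1)" by simp
    also have "\<dots> \<le> (\<Sum>xs\<in>?A. D - degree V E (last xs))" by (rule sum_mono) auto
    also have "\<dots> \<le> (\<Sum>xs\<in>nbw V E v j. D - degree V E (last xs))"
      by (rule sum_mono2[OF nbw_fin]) auto
    finally show ?thesis unfolding dfc_def .
  qed
  have "F2 \<subseteq> (\<Union>j\<in>{1..<k}. {xs\<in>nbw V E v j. degree V E (last xs) < D})" using F2 by auto
  then have "card F2 \<le> card (\<Union>j\<in>{1..<k}. {xs\<in>nbw V E v j. degree V E (last xs) < D})"
    using nbw_fin by (intro card_mono) auto
  also have "\<dots> \<le> (\<Sum>j\<in>{1..<k}. card {xs\<in>nbw V E v j. degree V E (last xs) < D})"
    by (rule card_UN_le) simp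
  also have "\<dots> \<le> (\<Sum>j\<in>{1..<k}. dfc v j)" by (rule sum_mono) (rule B)
  finally have "card F2 \<le> (\<Sum>j\<in>{1..<k}. dfc v j)" .
  then show ?thesis using A total_bound[OF v k] unfolding N'_def by linarith
qed

lemma pick:
  assumes ne: "\<And>s. s \<in> S \<Longrightarrow> X s \<noteq> {}"
    and dj: "\<And>s t. s \<in> S \<Longrightarrow> t \<in> S \<Longrightarrow> s \<noteq> t \<Longrightarrow> X s \<inter> X t = {}"
  shows "\<exists>F. F \<subseteq> (\<Union>s\<in>S. X s) \<and> card F = card S"
proof -
  define h where "h s = (SOME x. x \<in> X s)" for s
  have h: "h s \<in> X s" if "s \<in> S" for s
  proof -
    have "\<exists>x. x \<in> X s" using ne[OF that] by blast
    then show ?thesis unfolding h_def by (rule someI_ex)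
  qed
  have "inj_on h S"
  proof (rule inj_onI)
    fix s t assume st: "s \<in> S" "t \<in> S" "h s = h t"
    show "s = t"
    proof (rule ccontr)
      assume "s \<noteq> t"
      then have "X s \<inter> X t = {}" using dj st(1,2) by blast
      moreover have "h s \<in> X s" using h st(1) by blast
      moreover have "h t \<in> X t" using h st(2) by blast
      then have "h s \<in> X t" using st(3) by simp
      ultimately show False by blast
    qed
  qed
  then have "card (h ` S) = card S" by (rule card_image)
  moreover have "h ` S \<subseteq> (\<Union>s\<in>S. X s)" using h by blast
  ultimately show ?thesis by blast
qed

end

lemma avail_color:
  assumes "finite F" "card F < C"
  shows "\<exists>c<C. c \<notin> F"
proof (rule ccontr)
  assume "\<not> (\<exists>c<C. c \<notin> F)"
  then have "{0..<C} \<subseteq> F" by auto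
  then have "card {0..<C} \<le> card F" using assms(1) by (rule card_mono[rotated])
  then show False using assms(2) by simp
qed

lemma greedy:
  fixes A :: "'a \<Rightarrow> 'a \<Rightarrow> bool" and psi :: "'a \<Rightarrow> nat" and c0 :: "'a \<Rightarrow> nat"
  assumes finV: "finite V" and PV: "P \<subseteq> V" and irr: "\<And>v. \<not> A v v"
    and c0: "\<And>x. x \<in> P \<Longrightarrow> c0 x < C"
    and c0p: "\<And>u w. u \<in> P \<Longrightarrow> w \<in> P \<Longrightarrow> A u w \<Longrightarrow> c0 u \<noteq> c0 w"
    and cond: "\<And>v. v \<in> V - P \<Longrightarrow>
        card (c0 ` ({u\<in>V. A v u \<or> A u v} \<inter> P)) + card ({u\<in>V. A v u \<or> A u v} - P - {u. psi u < psi v}) < C"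
  shows "colourable V A C"
proof -
  have claim: "\<forall>S. S \<subseteq> V - P \<longrightarrow> card S = n \<longrightarrow> (\<exists>col. (\<forall>x\<in>P \<union> S. col x < C) \<and> (\<forall>x\<in>P. col x = c0 x)
      \<and> (\<forall>x\<in>P \<union> S. \<forall>y\<in>P \<union> S. A x y \<longrightarrow> col x \<noteq> col y))" for n
  proof (induction n)
    case 0
    show ?case
    proof (intro allI impI)
      fix S assume S: "S \<subseteq> V - P" "card S = 0"
      have "S \<subseteq> V" using S(1) by blast
      then have "finite S" using finite_subset finV by blast
      then have "S = {}" using S(2) by simp
      then show "\<exists>col. (\<forall>x\<in>P \<union> S. col x < C) \<and> (\<forall>x\<in>P. col x = c0 x)
      \<and> (\<forall>x\<in>P \<union> S. \<forall>y\<in>P \<union> S. A x y \<longrightarrow> col x \<noteq> col y)"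
        using c0 c0p by (intro exI[of _ c0]) auto
    qed
  next
    case (Suc n)
    show ?case
    proof (intro allI impI)
      fix S assume S: "S \<subseteq> V - P" "card S = Suc n"
      have "S \<subseteq> V" using S(1) by blast
      then have finS: "finite S" using finite_subset finV by blast
      have neS: "S \<noteq> {}" using S(2) by auto
      define m where "m = Min (psi ` S)"
      have "m \<in> psi ` S" unfolding m_def using finS neS by simp
      then obtain v where v: "v \<in> S" "psi v = m" by auto
      have vmin: "\<And>u. u \<in> S \<Longrightarrow> psi v \<le> psi u" unfolding v(2) m_def using finS by simp
      have s1: "S - {v} \<subseteq> V - P" using S(1) by blast
      have s2: "card (S - {v}) = n" using S(2) v(1) finS by simp
      from Suc.IH[rule_format, OF s1 s2] obtain col where col: "\<forall>x\<in>P \<union> (S - {v}). col x < C" "\<forall>x\<in>P. col x = c0 x"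
        "\<forall>x\<in>P \<union> (S - {v}). \<forall>y\<in>P \<union> (S - {v}). A x y \<longrightarrow> col x \<noteq> col y"
        by blast
      define Nb where "Nb = {u\<in>V. A v u \<or> A u v}"
      define Fb where "Fb = col ` (Nb \<inter> (P \<union> (S - {v})))"
      have "Fb \<subseteq> c0 ` (Nb \<inter> P) \<union> col ` (Nb \<inter> (S - {v}))" unfolding Fb_def using col(2) by auto
      moreover have "Nb \<inter> (S - {v}) \<subseteq> Nb - P - {u. psi u < psi v}"
      proof
        fix x assume x: "x \<in> Nb \<inter> (S - {v})"
        then have "psi v \<le> psi x" using vmin by blast
        then show "x \<in> Nb - P - {u. psi u < psi v}" using x S(1) by auto
      qed
      moreover have finNb: "finite Nb" unfolding Nb_def using finV by auto
      ultimately have "card Fb \<le> card (c0 ` (Nb \<inter> P)) + card (Nb - P - {u. psi u < psi v})"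
      proof -
        assume a: "Fb \<subseteq> c0 ` (Nb \<inter> P) \<union> col ` (Nb \<inter> (S - {v}))"
          "Nb \<inter> (S - {v}) \<subseteq> Nb - P - {u. psi u < psi v}" "finite Nb"
        have "card Fb \<le> card (c0 ` (Nb \<inter> P) \<union> col ` (Nb \<inter> (S - {v})))"
          using a(1) a(3) by (intro card_mono) auto
        also have "\<dots> \<le> card (c0 ` (Nb \<inter> P)) + card (col ` (Nb \<inter> (S - {v})))" by (rule card_Un_le)
        also have "card (col ` (Nb \<inter> (S - {v}))) \<le> card (Nb \<inter> (S - {v}))"
          using a(3) by (intro card_image_le) auto
        also have "\<dots> \<le> card (Nb - P - {u. psi u < psi v})" using a(2) a(3) by (intro card_mono) auto
        finally show ?thesis by simp
      qed
      also have "\<dots> < C" using cond[of v] v(1) S(1) unfolding Nb_def by blast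
      finally have "card Fb < C" .
      moreover have "finite Fb" unfolding Fb_def using finNb by auto
      ultimately obtain c where c: "c < C" "c \<notin> Fb" using avail_color by blast
      define col' where "col' = col(v := c)"
      have vP: "v \<notin> P" using v(1) S(1) by auto
      have PS: "P \<union> S = insert v (P \<union> (S - {v}))" using v(1) by auto
      show "\<exists>col. (\<forall>x\<in>P \<union> S. col x < C) \<and> (\<forall>x\<in>P. col x = c0 x)
      \<and> (\<forall>x\<in>P \<union> S. \<forall>y\<in>P \<union> S. A x y \<longrightarrow> col x \<noteq> col y)"
      proof (intro exI[of _ col'] conjI ballI impI)
        fix x assume "x \<in> P \<union> S" then show "col' x < C" using col(1) c(1) PS unfolding col'_def by auto
      next
        fix x assume "x \<in> P" then show "col' x = c0 x" using col(2) vP unfolding col'_def by auto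
      next
        fix x y assume xy: "x \<in> P \<union> S" "y \<in> P \<union> S" "A x y"
        have xV: "x \<in> V" "y \<in> V" using xy S(1) PV by auto
        show "col' x \<noteq> col' y"
        proof (cases "x = v")
          case True
          then have "y \<noteq> v" using xy(3) irr by auto
          then have "y \<in> Nb \<inter> (P \<union> (S - {v}))" using xy True xV unfolding Nb_def by auto
          then have "col y \<in> Fb" unfolding Fb_def by auto
          then show ?thesis using True \<open>y \<noteq> v\<close> c(2) unfolding col'_def by auto
        next
          case False
          show ?thesis
          proof (cases "y = v")
            case True
            then have "x \<in> Nb \<inter> (P \<union> (S - {v}))" using xy False xV unfolding Nb_def by auto
            then have "col x \<in> Fb" unfolding Fb_def by auto
            then show ?thesis using True False c(2) unfolding col'_def by auto
          next
            case False2: False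
            then show ?thesis using False col(3) xy unfolding col'_def by auto
          qed
        qed
      qed
    qed
  qed
  have q: "V - P \<subseteq> V - P" by simp
  from claim[rule_format, OF q refl] obtain col where col: "\<forall>x\<in>P \<union> (V - P). col x < C"
     "\<forall>x\<in>P \<union> (V - P). \<forall>y\<in>P \<union> (V - P). A x y \<longrightarrow> col x \<noteq> col y"
    by blast
  have "P \<union> (V - P) = V" using PV by auto
  then show ?thesis unfolding colourable_def using col by (intro exI[of _ col]) auto
qed

context CGD begin

lemma nbw_snoc:
  assumes xs: "xs \<in> nbw V E v n" and y: "y \<in> V" "E (last xs) y"
    and nb: "n \<ge> 1 \<Longrightarrow> y \<noteq> xs ! (n - 1)"
  shows "xs @ [y] \<in> nbw V E v (Suc n) \<and> last (xs @ [y]) = y \<and> (xs @ [y]) ! n = last xs"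
proof -
  have len: "length xs = Suc n" and hd: "hd xs = v" and sV: "set xs \<subseteq> V"
    and w: "\<And>j. Suc j < length xs \<Longrightarrow> E (xs ! j) (xs ! Suc j)"
    and nt: "\<And>j. Suc (Suc j) < length xs \<Longrightarrow> xs ! j \<noteq> xs ! Suc (Suc j)"
    using xs unfolding nbw_def iswalk_def nbt_def by auto
  have ne: "xs \<noteq> []" using len by auto
  have lst: "last xs = xs ! n" using len ne by (simp add: last_conv_nth)
  have nth1: "(xs @ [y]) ! j = xs ! j" if "j < Suc n" for j using that len by (simp add: nth_append)
  have nth2: "(xs @ [y]) ! Suc n = y" using len by (simp add: nth_append)
  have "iswalk E (xs @ [y])" unfolding iswalk_def
  proof (intro allI impI)
    fix j assume "Suc j < length (xs @ [y])"
    then have j: "j \<le> n" using len by simp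
    show "E ((xs @ [y]) ! j) ((xs @ [y]) ! Suc j)"
    proof (cases "j = n")
      case True then show ?thesis using nth1[of n] nth2 lst y(2) by simp
    next
      case False then show ?thesis using nth1[of j] nth1[of "Suc j"] w[of j] j len by simp
    qed
  qed
  moreover have "nbt (xs @ [y])" unfolding nbt_def
  proof (intro allI impI)
    fix j assume "Suc (Suc j) < length (xs @ [y])"
    then have j: "Suc j \<le> n" using len by simp
    show "(xs @ [y]) ! j \<noteq> (xs @ [y]) ! Suc (Suc j)"
    proof (cases "Suc j = n")
      case True then show ?thesis using nth1[of j] nth2 nb by force
    next
      case False then show ?thesis using nth1[of j] nth1[of "Suc (Suc j)"] nt[of j] j len by simp
    qed
  qed
  moreover have "hd (xs @ [y]) = v" using hd ne by simp
  moreover have "set (xs @ [y]) \<subseteq> V" using sV y by auto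
  ultimately show ?thesis using len nth1[of n] lst unfolding nbw_def by simp
qed

lemma nbw_take:
  assumes xs: "xs \<in> nbw V E v n" and m: "m \<le> n"
  shows "take (Suc m) xs \<in> nbw V E v m \<and> last (take (Suc m) xs) = xs ! m"
proof -
  have len: "length xs = Suc n" and hd: "hd xs = v" and sV: "set xs \<subseteq> V"
    and w: "\<And>j. Suc j < length xs \<Longrightarrow> E (xs ! j) (xs ! Suc j)"
    and nt: "\<And>j. Suc (Suc j) < length xs \<Longrightarrow> xs ! j \<noteq> xs ! Suc (Suc j)"
    using xs unfolding nbw_def iswalk_def nbt_def by auto
  let ?t = "take (Suc m) xs"
  have lt: "length ?t = Suc m" using len m by simp
  have "?t \<noteq> []" "xs \<noteq> []" using lt len by auto
  have "hd ?t = v" using hd \<open>xs \<noteq> []\<close> by simp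
  moreover have "set ?t \<subseteq> V" using sV by (meson in_set_takeD subset_iff)
  moreover have "iswalk E ?t" unfolding iswalk_def using w lt len m by auto
  moreover have "nbt ?t" unfolding nbt_def using nt lt len m by auto
  moreover have "last ?t = xs ! m" using \<open>?t \<noteq> []\<close> lt m len by (simp add: last_conv_nth)
  ultimately show ?thesis using lt unfolding nbw_def by simp
qed

end

locale PS = CGD V E D for V :: "'a set" and E D +
  fixes P :: "'a list" and k L c :: nat
  assumes lenP: "length P = Suc L" and Pwalk: "iswalk E P" and PV: "set P \<subseteq> V"
    and Pgeo: "\<And>a b n. a \<le> L \<Longrightarrow> b \<le> L \<Longrightarrow> dl n (P ! a) (P ! b) \<Longrightarrow> a - b \<le> n"
    and k1: "k \<ge> 1" and Ldef: "L = 4 * k" and cdef: "c = k - 1"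
begin

definition Pm where "Pm = {P ! r | r. c \<le> r \<and> r \<le> L - c}"

lemma P_V: "a \<le> L \<Longrightarrow> P ! a \<in> V"
  using PV lenP by (simp add: subset_iff)

lemma P_inset: "a \<le> L \<Longrightarrow> P ! a \<in> set P"
  using lenP by simp

lemma P_set: "x \<in> set P \<Longrightarrow> \<exists>r\<le>L. x = P ! r"
  using lenP by (metis in_set_conv_nth less_Suc_eq_le)

lemma P_inj: "a \<le> L \<Longrightarrow> b \<le> L \<Longrightarrow> P ! a = P ! b \<Longrightarrow> a = b"
proof -
  assume ab: "a \<le> L" "b \<le> L" "P ! a = P ! b"
  then have "dl 0 (P ! a) (P ! b)" using dl_refl P_V by simp
  then have "a - b \<le> 0" using Pgeo ab by blast
  moreover have "dl 0 (P ! b) (P ! a)" using ab dl_refl P_V by simp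
  then have "b - a \<le> 0" using Pgeo ab by blast
  ultimately show ?thesis by simp
qed

lemma P_dl: "a \<le> b \<Longrightarrow> b \<le> L \<Longrightarrow> dl (b - a) (P ! a) (P ! b)"
  using dl_walk[OF Pwalk PV] lenP by simp

lemma P_dl': "a \<le> b \<Longrightarrow> b \<le> L \<Longrightarrow> dl (b - a) (P ! b) (P ! a)"
  using P_dl dl_sym by blast

lemma P_edge: "a < L \<Longrightarrow> E (P ! a) (P ! Suc a)"
  using Pwalk lenP unfolding iswalk_def by simp

lemma Pm_sub: "Pm \<subseteq> V" unfolding Pm_def using P_V by auto

lemma Pm_subP: "Pm \<subseteq> set P" unfolding Pm_def using P_inset by auto

lemma Pm_ne: "Pm \<noteq> {}" unfolding Pm_def using Ldef cdef k1
  by (auto intro!: exI[of _ c])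

lemma psi_up: "s \<le> L - c \<Longrightarrow> sd V E Pm (P ! s) \<le> c - s"
proof (cases "c \<le> s")
  case True
  assume "s \<le> L - c"
  then have "P ! s \<in> Pm" unfolding Pm_def using True by auto
  moreover have "s \<le> L" using \<open>s \<le> L - c\<close> by simp
  ultimately have "sd V E Pm (P ! s) = 0" using sd_0[OF P_V Pm_sub Pm_ne] by blast
  then show ?thesis by simp
next
  case False
  assume "s \<le> L - c"
  have cL: "c \<le> L - c" using Ldef cdef by simp
  have "P ! c \<in> Pm" unfolding Pm_def using cL by auto
  moreover have "dl (c - s) (P ! s) (P ! c)" using P_dl[of s c] False cL by simp
  ultimately show ?thesis using sd_le by blast
qed

lemma psi_low: "i \<le> L \<Longrightarrow> c - i \<le> sd V E Pm (P ! i)"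
proof -
  assume i: "i \<le> L"
  obtain z where z: "z \<in> Pm" "dl (sd V E Pm (P ! i)) (P ! i) z"
    using sd_ex[OF P_V[OF i] Pm_sub Pm_ne] by blast
  then obtain r where r: "z = P ! r" "c \<le> r" "r \<le> L - c" unfolding Pm_def by auto
  have "dl (sd V E Pm (P ! i)) (P ! r) (P ! i)" using z(2) r(1) dl_sym by simp
  then have "r - i \<le> sd V E Pm (P ! i)" using Pgeo[of r i] r i by simp
  then show ?thesis using r(2) by simp
qed

lemma P_nbr: "s \<le> L \<Longrightarrow> y \<in> set P \<Longrightarrow> E (P ! s) y \<Longrightarrow> y = P ! (s - 1) \<or> y = P ! Suc s"
proof -
  assume s: "s \<le> L" and y: "y \<in> set P" "E (P ! s) y"
  obtain r where r: "r \<le> L" "y = P ! r" using P_set[OF y(1)] by blast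
  have "dl 1 (P ! s) (P ! r)" using y(2) r dl_edge by simp
  then have "s - r \<le> 1" "r - s \<le> 1" using Pgeo[of s r] Pgeo[of r s] s r dl_sym by blast+
  moreover have "r \<noteq> s" using y(2) r Eirr by auto
  ultimately have "r = s - 1 \<or> r = Suc s" by auto
  then show ?thesis using r by auto
qed

lemma off_nbr:
  assumes s: "1 \<le> s" "s < L" and dg: "degree V E (P ! s) \<ge> 3"
  shows "\<exists>w. w \<in> V \<and> E (P ! s) w \<and> w \<notin> set P"
proof (rule ccontr)
  assume "\<not> ?thesis"
  then have "nbrs (P ! s) \<subseteq> {P ! (s - 1), P ! Suc s}"
    using P_nbr[of s] s unfolding nbrs_def by auto
  then have "card (nbrs (P ! s)) \<le> card {P ! (s - 1), P ! Suc s}" by (intro card_mono) auto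
  also have "\<dots> \<le> 2" by (simp add: card_insert_if)
  finally show False using dg deg_nbrs by simp
qed

end

context CGD begin

lemma nbw_len: "xs \<in> nbw V E v n \<Longrightarrow> length xs = Suc n" unfolding nbw_def by auto

lemma nbw_disj: "s \<noteq> t \<Longrightarrow> xs \<in> nbw V E v s \<Longrightarrow> xs \<in> nbw V E v t \<Longrightarrow> False"
proof -
  assume "s \<noteq> t" "xs \<in> nbw V E v s" "xs \<in> nbw V E v t"
  then have "length xs = Suc s" "length xs = Suc t" using nbw_len by blast+
  then show False using \<open>s \<noteq> t\<close> by simp
qed

lemma AB_bound:
  assumes v: "v \<in> V" and k: "k \<ge> 1" and F: "F \<subseteq> (\<Union>j\<in>{1..k}. nbw V E v j)" "card F = k - 2"
    and good: "\<forall>xs\<in>F. last xs \<in> Lat \<or> (length xs \<le> k \<and> degree V E (last xs) < D)"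
  shows "card {u\<in>V. u \<noteq> v \<and> dl k v u \<and> u \<notin> Lat} + (k - 2) \<le> f_tree k D"
proof -
  define F1 where "F1 = {xs\<in>F. last xs \<in> Lat}"
  define F2 where "F2 = F - F1"
  have finF: "finite F" using finite_subset[OF F(1)] nbw_fin by auto
  have "card F = card F1 + card F2" unfolding F2_def F1_def
    using finF by (metis (no_types, lifting) card_Diff_subset finite_subset le_add_diff_inverse mem_Collect_eq subsetI card_mono)
  moreover have "F1 \<subseteq> (\<Union>j\<in>{1..k}. nbw V E v j)" "\<forall>xs\<in>F1. last xs \<in> Lat"
    using F(1) unfolding F1_def by auto
  moreover have "F2 \<subseteq> (\<Union>j\<in>{1..<k}. nbw V E v j)"
  proof
    fix xs assume xs: "xs \<in> F2"
    then obtain j where j: "j \<in> {1..k}" "xs \<in> nbw V E v j" using F(1) unfolding F2_def by auto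
    have "length xs \<le> k" using xs good unfolding F2_def F1_def by auto
    then have "j < k" using nbw_len[OF j(2)] by simp
    then show "xs \<in> (\<Union>j\<in>{1..<k}. nbw V E v j)" using j by auto
  qed
  moreover have "\<forall>xs\<in>F2. degree V E (last xs) < D" using good unfolding F2_def F1_def by auto
  ultimately show ?thesis using count[OF v k, of F1 Lat F2] F(2) by simp
qed

end

context PS begin

abbreviation "psi \<equiv> sd V E Pm"

lemma caseA:
  assumes v: "v \<in> V" and U: "length U = Suc d" "hd U = v" "set U \<subseteq> V" "iswalk E U"
      "\<forall>s\<le>d. psi (U ! s) = d - s"
    and e: "e \<le> d" "\<forall>s<e. U ! s \<notin> set P" "e \<ge> k - 1"
  shows "\<exists>F. F \<subseteq> (\<Union>j\<in>{1..k}. nbw V E v j) \<and> card F = k - 2 \<and>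
     (\<forall>xs\<in>F. last xs \<in> {u\<in>V. u \<notin> set P \<and> psi u < d})"
proof -
  let ?Lat = "{u\<in>V. u \<notin> set P \<and> psi u < d}"
  have Un: "U \<in> nbw V E v d" using geo_nbw[OF U(1-4) U(5)] .
  define X where "X j = {xs\<in>nbw V E v j. last xs \<in> ?Lat}" for j
  have ne: "X j \<noteq> {}" if "j \<in> {1..k-2}" for j
  proof -
    have j: "1 \<le> j" "j < e" "j \<le> d" using that e by auto
    have t: "take (Suc j) U \<in> nbw V E v j" "last (take (Suc j) U) = U ! j" using nbw_take[OF Un j(3)] by auto
    have "U ! j \<in> V" using U(1,3) j by (simp add: subset_iff)
    moreover have "U ! j \<notin> set P" using e(2) j by simp
    moreover have "psi (U ! j) < d" using U(5) j by simp
    ultimately have "take (Suc j) U \<in> X j" using t unfolding X_def by simp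
    then show ?thesis by blast
  qed
  have dj: "X s \<inter> X t = {}" if "s \<noteq> t" for s t
    using that nbw_disj unfolding X_def by blast
  obtain F where F: "F \<subseteq> (\<Union>j\<in>{1..k-2}. X j)" "card F = card {1..k-2}"
    using pick[of "{1..k-2}" X] ne dj by blast
  show ?thesis
  proof (intro exI[of _ F] conjI)
    show "F \<subseteq> (\<Union>j\<in>{1..k}. nbw V E v j)"
    proof
      fix xs assume "xs \<in> F"
      then obtain j where "j \<in> {1..k-2}" "xs \<in> nbw V E v j" using F(1) unfolding X_def by blast
      then show "xs \<in> (\<Union>j\<in>{1..k}. nbw V E v j)" by auto
    qed
    show "card F = k - 2" using F(2) by simp
    show "\<forall>xs\<in>F. last xs \<in> ?Lat" using F(1) unfolding X_def by auto
  qed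
qed

end

context PS begin

lemma caseB:
  assumes v: "v \<in> V" and U: "length U = Suc d" "hd U = v" "set U \<subseteq> V" "iswalk E U"
      "\<forall>s\<le>d. psi (U ! s) = d - s"
    and d2: "d \<ge> 2"
    and e: "1 \<le> e" "e \<le> d" "\<forall>s<e. U ! s \<notin> set P" "e \<le> k - 2" "U ! e = P ! i" "i \<le> 2 * k"
  shows "\<exists>F. F \<subseteq> (\<Union>j\<in>{1..k}. nbw V E v j) \<and> card F = k - 2 \<and>
     (\<forall>xs\<in>F. last xs \<in> {u\<in>V. u \<notin> set P \<and> psi u < d} \<or> (length xs \<le> k \<and> degree V E (last xs) < D))"
proof -
  let ?Lat = "{u\<in>V. u \<notin> set P \<and> psi u < d}"
  have k3: "k \<ge> 3" using e by linarith
  have Un: "U \<in> nbw V E v d" using geo_nbw[OF U(1-4) U(5)] .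
  have LL: "L = 4 * k" "c = k - 1" using Ldef cdef by auto
  have psi_i: "c - i \<le> d - e"
  proof -
    have "psi (U ! e) = d - e" using U(5) e(2) by simp
    then show ?thesis using psi_low[of i] e(5,6) LL by simp
  qed
  have W: "\<forall>t. t \<le> k - e - 1 \<longrightarrow> (\<exists>W. W \<in> nbw V E v (e + t) \<and> last W = P ! (i + t) \<and>
            W ! (e + t - 1) = (if t = 0 then U ! (e - 1) else P ! (i + t - 1)))"
  proof (intro allI)
    fix t show "t \<le> k - e - 1 \<longrightarrow> (\<exists>W. W \<in> nbw V E v (e + t) \<and> last W = P ! (i + t) \<and>
            W ! (e + t - 1) = (if t = 0 then U ! (e - 1) else P ! (i + t - 1)))"
    proof (induction t)
      case 0
      have "take (Suc e) U \<in> nbw V E v e \<and> last (take (Suc e) U) = U ! e" using nbw_take[OF Un e(2)] .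
      moreover have "take (Suc e) U ! (e - 1) = U ! (e - 1)" using e(1) by simp
      ultimately show ?case using e(5) by (intro impI exI[of _ "take (Suc e) U"]) simp
    next
      case (Suc t)
      show ?case
      proof
        assume st: "Suc t \<le> k - e - 1"
        then obtain W where W: "W \<in> nbw V E v (e + t)" "last W = P ! (i + t)"
          "W ! (e + t - 1) = (if t = 0 then U ! (e - 1) else P ! (i + t - 1))" using Suc.IH by auto
        have it: "i + t < L" using st e LL by linarith
        let ?y = "P ! (i + Suc t)"
        have yV: "?y \<in> V" using P_V it by simp
        have Ey: "E (last W) ?y" using W(2) P_edge[OF it] by simp
        have yne: "?y \<noteq> W ! (e + t - 1)"
        proof (cases "t = 0")
          case True
          have "U ! (e - 1) \<notin> set P" using e(1,3) by simp
          moreover have "?y \<in> set P" using P_inset it by simp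
          ultimately show ?thesis using W(3) True by auto
        next
          case False
          have "i + Suc t \<noteq> i + t - 1" using False by simp
          then have "?y \<noteq> P ! (i + t - 1)" using P_inj[of "i + Suc t" "i + t - 1"] it by linarith
          then show ?thesis using W(3) False by simp
        qed
        have sn: "W @ [?y] \<in> nbw V E v (Suc (e + t)) \<and> last (W @ [?y]) = ?y \<and> (W @ [?y]) ! (e + t) = last W"
          using nbw_snoc[OF W(1) yV Ey] yne by blast
        show "\<exists>W. W \<in> nbw V E v (e + Suc t) \<and> last W = P ! (i + Suc t) \<and>
            W ! (e + Suc t - 1) = (if Suc t = 0 then U ! (e - 1) else P ! (i + Suc t - 1))"
          using sn W(2) by (intro exI[of _ "W @ [?y]"]) simp
      qed
    qed
  qed
  define tt where "tt j = j - e + 1" for j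
  define dfs where "dfs j = (degree V E (P ! (i + tt j)) < D)" for j
  define lenX where "lenX j = (if j < e then j else if dfs j then j + 1 else j + 2)" for j
  define X where "X j = (if j < e then {xs\<in>nbw V E v j. last xs \<in> ?Lat}
        else if dfs j then {xs\<in>nbw V E v (j + 1). last xs = P ! (i + tt j)}
        else {xs\<in>nbw V E v (j + 2). last xs \<in> ?Lat})" for j
  have Xprop: "xs \<in> nbw V E v (lenX j) \<and> (last xs \<in> set P \<longleftrightarrow> (\<not> j < e \<and> dfs j))" if "xs \<in> X j" "j \<in> {1..k-2}" for xs j
  proof -
    have jk: "j \<le> k - 2" using that(2) by simp
    have "i + tt j \<le> L" using jk e LL unfolding tt_def by arith
    then have "P ! (i + tt j) \<in> set P" using P_inset by simp
    then show ?thesis using that(1) unfolding X_def lenX_def by (auto split: if_splits)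
  qed
  have dj: "X s \<inter> X t = {}" if st: "s \<in> {1..k-2}" "t \<in> {1..k-2}" "s \<noteq> t" for s t
  proof (rule ccontr)
    assume "X s \<inter> X t \<noteq> {}"
    then obtain xs where xs: "xs \<in> X s" "xs \<in> X t" by blast
    have a: "xs \<in> nbw V E v (lenX s)" "xs \<in> nbw V E v (lenX t)"
      "(\<not> s < e \<and> dfs s) = (\<not> t < e \<and> dfs t)" using Xprop[OF xs(1) st(1)] Xprop[OF xs(2) st(2)] by auto
    have "lenX s = lenX t" using nbw_disj a(1,2) by blast
    then show False using a(3) st(3) unfolding lenX_def by (auto split: if_splits)
  qed
  have ne: "X j \<noteq> {}" if j: "j \<in> {1..k-2}" for j
  proof (cases "j < e")
    case True
    have jj: "1 \<le> j" "j \<le> d" using j True e by auto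
    have t: "take (Suc j) U \<in> nbw V E v j" "last (take (Suc j) U) = U ! j" using nbw_take[OF Un jj(2)] by auto
    have "U ! j \<in> V" using U(1,3) jj by (simp add: subset_iff)
    moreover have "U ! j \<notin> set P" using e(3) True by simp
    moreover have "psi (U ! j) < d" using U(5) jj by simp
    ultimately have "take (Suc j) U \<in> X j" using t True unfolding X_def by simp
    then show ?thesis by blast
  next
    case False
    define t where "t = tt j"
    have t1: "1 \<le> t" "t \<le> k - e - 1" "e + t = j + 1" using False j unfolding t_def tt_def by auto
    obtain W where W: "W \<in> nbw V E v (e + t)" "last W = P ! (i + t)"
          "W ! (e + t - 1) = P ! (i + t - 1)" using W t1 by fastforce
    show ?thesis
    proof (cases "dfs j")
      case True
      then have "W \<in> X j" using W False t1 unfolding X_def t_def by simp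
      then show ?thesis by blast
    next
      case nd: False
      have "degree V E (P ! (i + t)) \<ge> 3" using nd D3 unfolding dfs_def t_def by simp
      moreover have "1 \<le> i + t" "i + t < L" using t1 e LL by linarith+
      ultimately obtain w where w: "w \<in> V" "E (P ! (i + t)) w" "w \<notin> set P" using off_nbr by blast
      have "w \<noteq> W ! (e + t - 1)" using W(3) w(3) P_inset[of "i + t - 1"] \<open>i + t < L\<close> by auto
      then have sn: "W @ [w] \<in> nbw V E v (Suc (e + t)) \<and> last (W @ [w]) = w"
        using nbw_snoc[OF W(1) w(1)] w(2) W(2) by simp
      have "psi w \<le> Suc (psi (P ! (i + t)))" using sd_edge[OF Esym[OF w(2)] Pm_sub Pm_ne] .
      moreover have "psi (P ! (i + t)) \<le> c - (i + t)" using psi_up[of "i + t"] t1 e LL by simp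
      ultimately have "psi w < d" using psi_i t1 d2 e by linarith
      then have "W @ [w] \<in> X j" using sn w False nd t1 unfolding X_def by simp
      then show ?thesis by blast
    qed
  qed
  obtain F where F: "F \<subseteq> (\<Union>j\<in>{1..k-2}. X j)" "card F = card {1..k-2}"
    using pick[of "{1..k-2}" X] ne dj by blast
  show ?thesis
  proof (intro exI[of _ F] conjI ballI)
    show "card F = k - 2" using F(2) by simp
    show "F \<subseteq> (\<Union>j\<in>{1..k}. nbw V E v j)"
    proof
      fix xs assume "xs \<in> F"
      then obtain j where j: "j \<in> {1..k-2}" "xs \<in> X j" using F(1) by blast
      then have "xs \<in> nbw V E v (lenX j)" using Xprop by blast
      moreover have "lenX j \<in> {1..k}" using j(1) unfolding lenX_def by auto
      ultimately show "xs \<in> (\<Union>j\<in>{1..k}. nbw V E v j)" by blast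
    qed
  next
    fix xs assume "xs \<in> F"
    then obtain j where j: "j \<in> {1..k-2}" "xs \<in> X j" using F(1) by blast
    show "last xs \<in> ?Lat \<or> (length xs \<le> k \<and> degree V E (last xs) < D)"
    proof (cases "\<not> j < e \<and> dfs j")
      case True
      then have "xs \<in> nbw V E v (j + 1)" "last xs = P ! (i + tt j)" using j(2) unfolding X_def by auto
      then have "length xs \<le> k" "degree V E (last xs) < D" using nbw_len j(1) True unfolding dfs_def by auto
      then show ?thesis by simp
    next
      case False
      then have "last xs \<in> ?Lat" using j(2) unfolding X_def by (auto split: if_splits)
      then show ?thesis by simp
    qed
  qed
qed

end

context PS begin

lemma rev_PS: "PS V E D (rev P) k L c"
proof -
  have "iswalk E (rev P)" unfolding iswalk_def
  proof (intro allI impI)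
    fix j assume j: "Suc j < length (rev P)"
    have "rev P ! j = P ! (L - j)" "rev P ! Suc j = P ! (L - Suc j)" using j lenP by (auto simp: rev_nth)
    moreover have "E (P ! (L - Suc j)) (P ! Suc (L - Suc j))" using P_edge j lenP by simp
    moreover have "Suc (L - Suc j) = L - j" using j lenP by simp
    ultimately show "E (rev P ! j) (rev P ! Suc j)" using Esym by simp
  qed
  moreover have "a - b \<le> n" if ab: "a \<le> L" "b \<le> L" "dl n (rev P ! a) (rev P ! b)" for a b n
  proof -
    have "rev P ! a = P ! (L - a)" "rev P ! b = P ! (L - b)" using ab lenP by (auto simp: rev_nth)
    then have "dl n (P ! (L - b)) (P ! (L - a))" using ab(3) dl_sym by simp
    then have "(L - b) - (L - a) \<le> n" using Pgeo[of "L - b" "L - a" n] by simp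
    then show ?thesis using ab by simp
  qed
  ultimately show ?thesis
    using lenP PV k1 Ldef cdef by unfold_locales auto
qed

lemma rev_Pm: "PS.Pm (rev P) L c = Pm"
proof -
  interpret R: PS V E D "rev P" k L c by (rule rev_PS)
  have "R.Pm = Pm"
    unfolding R.Pm_def Pm_def
  proof (intro set_eqI iffI)
    fix x assume "x \<in> {rev P ! r |r. c \<le> r \<and> r \<le> L - c}"
    then obtain r where r: "x = rev P ! r" "c \<le> r" "r \<le> L - c" by auto
    then have "x = P ! (L - r)" using lenP by (simp add: rev_nth)
    moreover have "c \<le> L - r" "L - r \<le> L - c" using r Ldef cdef by auto
    ultimately show "x \<in> {P ! r |r. c \<le> r \<and> r \<le> L - c}" by blast
  next
    fix x assume "x \<in> {P ! r |r. c \<le> r \<and> r \<le> L - c}"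
    then obtain r where r: "x = P ! r" "c \<le> r" "r \<le> L - c" by auto
    then have "x = rev P ! (L - r)" using lenP by (simp add: rev_nth)
    moreover have "c \<le> L - r" "L - r \<le> L - c" using r Ldef cdef by auto
    ultimately show "x \<in> {rev P ! r |r. c \<le> r \<and> r \<le> L - c}" by blast
  qed
  then show ?thesis .
qed

end

lemma mod_ne: "(a::nat) \<noteq> b \<Longrightarrow> a - b \<le> k \<Longrightarrow> b - a \<le> k \<Longrightarrow> a mod Suc k \<noteq> b mod Suc k"
proof -
  have aux: "x < y \<Longrightarrow> y - x \<le> k \<Longrightarrow> x mod Suc k \<noteq> y mod Suc k" for x y :: nat
  proof
    assume xy: "x < y" "y - x \<le> k" "x mod Suc k = y mod Suc k"
    then have "Suc k dvd y - x" using mod_eq_dvd_iff_nat[of x y "Suc k"] by simp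
    then have "Suc k \<le> y - x" using xy(1) by (simp add: dvd_imp_le)
    then show False using xy(2) by simp
  qed
  assume "a \<noteq> b" "a - b \<le> k" "b - a \<le> k"
  then show ?thesis using aux[of a b] aux[of b a] by (cases "a < b") auto
qed

context PS begin

lemma vertex_AB:
  assumes v: "v \<in> V" "v \<notin> set P" and d: "psi v = d" "d \<ge> 2"
  shows "card {u\<in>V. u \<noteq> v \<and> dl k v u \<and> u \<notin> {u\<in>V. u \<notin> set P \<and> psi u < d}} + (k - 2) \<le> f_tree k D"
proof -
  let ?Lat = "{u\<in>V. u \<notin> set P \<and> psi u < d}"
  obtain U where U: "length U = Suc d" "hd U = v" "set U \<subseteq> V" "iswalk E U"
      "\<forall>s\<le>d. psi (U ! s) = d - s" using geo_walk[OF v(1) Pm_sub Pm_ne, of d] d by blast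
  have "U ! d \<in> V" using U(1,3) by (simp add: subset_iff)
  moreover have "psi (U ! d) = 0" using U(5) by simp
  ultimately have "U ! d \<in> Pm" using sd_0[OF _ Pm_sub Pm_ne] by blast
  then have UdP: "U ! d \<in> set P" using Pm_subP by blast
  define e where "e = (LEAST s. U ! s \<in> set P)"
  have eP: "U ! e \<in> set P" unfolding e_def using UdP by (rule LeastI)
  have ed: "e \<le> d" unfolding e_def using UdP by (rule Least_le)
  have eb: "\<forall>s<e. U ! s \<notin> set P" unfolding e_def using not_less_Least by blast
  have "U ! 0 = v" using U(1,2) by (metis hd_conv_nth list.size(3) nat.distinct(1))
  then have e1: "1 \<le> e" using eP v(2) by (cases e) auto
  obtain i where i: "i \<le> L" "U ! e = P ! i" using P_set[OF eP] by blast
  have "\<exists>F. F \<subseteq> (\<Union>j\<in>{1..k}. nbw V E v j) \<and> card F = k - 2 \<and>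
     (\<forall>xs\<in>F. last xs \<in> ?Lat \<or> (length xs \<le> k \<and> degree V E (last xs) < D))"
  proof (cases "e \<ge> k - 1")
    case True
    then show ?thesis using caseA[OF v(1) U ed eb True] by blast
  next
    case False
    then have ek: "e \<le> k - 2" by simp
    show ?thesis
    proof (cases "i \<le> 2 * k")
      case True
      then show ?thesis using caseB[OF v(1) U d(2) e1 ed eb ek i(2) True] by blast
    next
      case False
      interpret R: PS V E D "rev P" k L c by (rule rev_PS)
      have RP: "R.Pm = Pm" using rev_Pm .
      have ri: "rev P ! (L - i) = P ! i" using i(1) lenP by (simp add: rev_nth)
      have li: "L - i \<le> 2 * k" using False Ldef by simp
      have eb': "\<forall>s<e. U ! s \<notin> set (rev P)" using eb by simp
      have U5: "\<forall>s\<le>d. sd V E R.Pm (U ! s) = d - s" using U(5) RP by simp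
      have "\<exists>F. F \<subseteq> (\<Union>j\<in>{1..k}. nbw V E v j) \<and> card F = k - 2 \<and>
        (\<forall>xs\<in>F. last xs \<in> {u\<in>V. u \<notin> set (rev P) \<and> sd V E R.Pm u < d} \<or> (length xs \<le> k \<and> degree V E (last xs) < D))"
        using R.caseB[OF v(1) U(1-4) U5 d(2) e1 ed eb' ek _ li] i(2) ri by simp
      then show ?thesis using RP by simp
    qed
  qed
  then obtain F where F: "F \<subseteq> (\<Union>j\<in>{1..k}. nbw V E v j)" "card F = k - 2"
     "\<forall>xs\<in>F. last xs \<in> ?Lat \<or> (length xs \<le> k \<and> degree V E (last xs) < D)" by blast
  show ?thesis using AB_bound[OF v(1) k1 F(1,2) F(3)] .
qed

lemma vertex_D1:
  assumes v: "v \<in> V" "v \<notin> set P" and d: "psi v = 1"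
  shows "\<exists>j. c \<le> j \<and> j \<le> L - c \<and> E v (P ! j)"
proof -
  obtain z where z: "z \<in> Pm" "dl 1 v z" using sd_ex[OF v(1) Pm_sub Pm_ne] d by auto
  have "v \<noteq> z" using z(1) Pm_subP v(2) by blast
  then obtain w where w: "E v w" "dl 0 w z" using dl_Suc[of 0 v z] z(2) by auto
  then have "E v z" using dl_0 by blast
  then show ?thesis using z(1) unfolding Pm_def by auto
qed

end

lemma f_tree_ge: "D \<ge> 2 \<Longrightarrow> k * D \<le> f_tree k D"
proof -
  assume D: "D \<ge> 2"
  have "(\<Sum>i<k. (1::nat)) \<le> (\<Sum>i<k. (D - 1) ^ i)"
  proof (rule sum_mono)
    fix i show "(1::nat) \<le> (D - 1) ^ i" using D by (intro one_le_power) simp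
  qed
  then have "k \<le> (\<Sum>i<k. (D - 1) ^ i)" by simp
  then show ?thesis unfolding f_tree_def by (simp add: mult.commute)
qed

context PS begin

lemma colour: "colourable V (graph_power V E k) (f_tree k D + 3 - k)"
proof -
  define f where "f = f_tree k D"
  have f3: "3 * k \<le> f"
  proof -
    have "k * D \<le> f" using f_tree_ge[of D k] D3 unfolding f_def by simp
    moreover have "k * 3 \<le> k * D" using D3 by (intro mult_le_mono2)
    ultimately show ?thesis by linarith
  qed
  define C where "C = f + 3 - k"
  define c0 where "c0 x = (LEAST r. r \<le> L \<and> P ! r = x) mod Suc k" for x
  have c0P: "c0 (P ! r) = r mod Suc k" if "r \<le> L" for r
  proof -
    have "(LEAST r'. r' \<le> L \<and> P ! r' = P ! r) = r"
    proof (rule Least_equality)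
      show "r \<le> L \<and> P ! r = P ! r" using that by simp
      fix y assume "y \<le> L \<and> P ! y = P ! r"
      then have "y = r" using P_inj that by blast
      then show "r \<le> y" by simp
    qed
    then show ?thesis unfolding c0_def by simp
  qed
  let ?A = "graph_power V E k"
  have Nb: "{u\<in>V. ?A v u \<or> ?A u v} = {u\<in>V. u \<noteq> v \<and> dl k v u}" for v
    unfolding graph_power_def using dl_sym by blast
  show ?thesis
    unfolding f_def[symmetric]
  proof (rule greedy[of V "set P" ?A c0 "f + 3 - k" psi])
    show "finite V" by (rule finV)
    show "set P \<subseteq> V" by (rule PV)
    show "\<And>v. \<not> ?A v v" unfolding graph_power_def by simp
    show "c0 x < f + 3 - k" if xP: "x \<in> set P" for x
    proof -
      obtain r where r: "r \<le> L" "x = P ! r" using P_set[OF xP] by blast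
      have "c0 x = r mod Suc k" using c0P[OF r(1)] r(2) by simp
      then have "c0 x < Suc k" by simp
      then show ?thesis using f3 by simp
    qed
    show "c0 u \<noteq> c0 w" if uw: "u \<in> set P" "w \<in> set P" "?A u w" for u w
    proof -
      obtain a where a: "a \<le> L" "u = P ! a" using P_set[OF uw(1)] by blast
      obtain b where b: "b \<le> L" "w = P ! b" using P_set[OF uw(2)] by blast
      note ab = a b
      have "a \<noteq> b" using uw(3) ab unfolding graph_power_def by auto
      moreover have "dl k (P ! a) (P ! b)" using uw(3) ab unfolding graph_power_def by simp
      then have "a - b \<le> k" "b - a \<le> k" using Pgeo[of a b k] Pgeo[of b a k] ab dl_sym by blast+
      ultimately have "a mod Suc k \<noteq> b mod Suc k" by (rule mod_ne)
      then show ?thesis using c0P[OF a(1)] c0P[OF b(1)] ab by simp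
    qed
    fix v assume vv: "v \<in> V - set P"
    then have v: "v \<in> V" "v \<notin> set P" by auto
    define N where "N = {u\<in>V. u \<noteq> v \<and> dl k v u}"
    have finN: "finite N" unfolding N_def using finV by auto
    have cN: "card N \<le> f"
      using count[OF v(1) k1, of "{}" "{}" "{}"] unfolding f_def N_def by simp
    define d where "d = psi v"
    have d1: "d \<ge> 1"
    proof (rule ccontr)
      assume "\<not> d \<ge> 1"
      then have "psi v = 0" unfolding d_def by simp
      then have "v \<in> Pm" using sd_0[OF v(1) Pm_sub Pm_ne] by blast
      then show False using Pm_subP v(2) by blast
    qed
    show "card (c0 ` ({u\<in>V. ?A v u \<or> ?A u v} \<inter> set P)) +
          card ({u\<in>V. ?A v u \<or> ?A u v} - set P - {u. psi u < psi v}) < f + 3 - k"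
      unfolding Nb N_def[symmetric]
    proof (cases "d = 1")
      case True
      obtain j where j: "c \<le> j" "j \<le> L - c" "E v (P ! j)" using vertex_D1[OF v] True d_def by auto
      define S where "S = (\<lambda>r. P ! r) ` {j - (k - 1) .. j + (k - 1)}"
      have jr: "j + (k - 1) \<le> L" using j(2) Ldef cdef by simp
      have "inj_on (\<lambda>r. P ! r) {j - (k - 1) .. j + (k - 1)}"
        by (rule inj_onI) (use jr P_inj in auto)
      then have cS: "card S = 2 * k - 1" unfolding S_def using j(1) cdef k1 by (simp add: card_image)
      have SN: "S \<subseteq> N \<inter> set P"
      proof
        fix x assume "x \<in> S"
        then obtain r where r: "x = P ! r" "j - (k - 1) \<le> r" "r \<le> j + (k - 1)" unfolding S_def by auto
        have rL: "r \<le> L" using r jr by simp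
        have "dl 1 v (P ! j)" using dl_edge j(3) by simp
        moreover have "dl (k - 1) (P ! j) (P ! r)"
        proof (cases "j \<le> r")
          case True then show ?thesis using P_dl[of j r] rL r dl_mono[of "r - j" "P ! j" "P ! r" "k - 1"] by simp
        next
          case False then show ?thesis using P_dl'[of r j] jr r dl_mono[of "j - r" "P ! j" "P ! r" "k - 1"] by simp
        qed
        ultimately have "dl (1 + (k - 1)) v (P ! r)" by (rule dl_trans)
        then have "dl k v (P ! r)" using k1 by simp
        moreover have "P ! r \<noteq> v" using v(2) P_inset rL by auto
        ultimately show "x \<in> N \<inter> set P" unfolding N_def using r(1) P_V rL P_inset by auto
      qed
      have c1: "card (c0 ` (N \<inter> set P)) \<le> Suc k"
      proof -
        have "c0 ` (N \<inter> set P) \<subseteq> {..<Suc k}" unfolding c0_def by auto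
        then show ?thesis using card_mono[of "{..<Suc k}"] by fastforce
      qed
      have "card S \<le> card (N \<inter> set P)" using SN finN by (intro card_mono) auto
      moreover have "card (N - set P - {u. psi u < psi v}) \<le> card (N - set P)"
        using finN by (intro card_mono) auto
      moreover have "card (N - set P) + card (N \<inter> set P) = card N"
      proof -
        have "(N - set P) \<union> (N \<inter> set P) = N" by blast
        moreover have "card ((N - set P) \<union> (N \<inter> set P)) = card (N - set P) + card (N \<inter> set P)"
          using finN by (intro card_Un_disjoint) auto
        ultimately show ?thesis by simp
      qed
      ultimately show "card (c0 ` (N \<inter> set P)) + card (N - set P - {u. psi u < psi v}) < f + 3 - k"
        using c1 cN cS f3 k1 by linarith
    next
      case False
      then have d2: "d \<ge> 2" using d1 by simp
      let ?Lat = "{u\<in>V. u \<notin> set P \<and> psi u < d}"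
      have AB: "card {u\<in>V. u \<noteq> v \<and> dl k v u \<and> u \<notin> ?Lat} + (k - 2) \<le> f"
        using vertex_AB[OF v d_def[symmetric] d2] unfolding f_def .
      have eq: "{u\<in>V. u \<noteq> v \<and> dl k v u \<and> u \<notin> ?Lat} = (N \<inter> set P) \<union> (N - set P - {u. psi u < psi v})"
        unfolding N_def d_def by auto
      have "card (c0 ` (N \<inter> set P)) \<le> card (N \<inter> set P)" using finN by (intro card_image_le) auto
      moreover have "card ((N \<inter> set P) \<union> (N - set P - {u. psi u < psi v})) =
           card (N \<inter> set P) + card (N - set P - {u. psi u < psi v})"
        using finN by (intro card_Un_disjoint) auto
      ultimately show "card (c0 ` (N \<inter> set P)) + card (N - set P - {u. psi u < psi v}) < f + 3 - k"
        using AB eq f3 by simp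
    qed
  qed
qed

end

theorem theorem4:
  fixes k D :: nat
  assumes "k \<ge> 1" and "D \<ge> 3"
  shows "\<exists>N :: nat. \<forall>(V :: nat set) E.
           simple_graph V E \<and> connected_graph V E \<and> max_degree V E = D
           \<and> k_gap k V E < int k - 2 \<longrightarrow> card V \<le> N"
proof (intro exI[of _ "Suc (f_tree (4 * k) D)"] allI impI)
  fix V :: "nat set" and E
  assume H: "simple_graph V E \<and> connected_graph V E \<and> max_degree V E = D \<and> k_gap k V E < int k - 2"
  have sg: "simple_graph V E" and cg: "connected_graph V E" and md: "max_degree V E = D"
    and gap: "k_gap k V E < int k - 2" using H by auto
  have finV: "finite V" using sg unfolding simple_graph_def by auto
  have degD: "degree V E x \<le> D" if "x \<in> V" for x
    using md finV that unfolding max_degree_def by (auto intro: Max_ge)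
  interpret CGD V E D
    by unfold_locales (use sg cg degD assms(2) in auto)
  show "card V \<le> Suc (f_tree (4 * k) D)"
  proof (rule ccontr)
    assume big: "\<not> card V \<le> Suc (f_tree (4 * k) D)"
    have "V \<noteq> {}" using cg unfolding connected_graph_def by auto
    then obtain r where r: "r \<in> V" by blast
    have k4: "4 * k \<ge> 1" using assms(1) by simp
    have "\<exists>u\<in>V. \<not> dl (4 * k) r u"
    proof (rule ccontr)
      assume "\<not> (\<exists>u\<in>V. \<not> dl (4 * k) r u)"
      then have "V \<subseteq> insert r {u\<in>V. u \<noteq> r \<and> dl (4 * k) r u}" by auto
      then have "card V \<le> card (insert r {u\<in>V. u \<noteq> r \<and> dl (4 * k) r u})"
        using finV by (intro card_mono) auto
      also have "\<dots> \<le> Suc (card {u\<in>V. u \<noteq> r \<and> dl (4 * k) r u})" by (rule card_insert_le_m1) auto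
      also have "card {u\<in>V. u \<noteq> r \<and> dl (4 * k) r u} \<le> f_tree (4 * k) D"
        using count[OF r k4, of "{}" "{}" "{}"] by simp
      finally show False using big by simp
    qed
    then obtain u where u: "u \<in> V" "\<not> dl (4 * k) r u" by blast
    define m where "m = sd V E {u} r"
    obtain xs where xs: "length xs = Suc m" "hd xs = r" "set xs \<subseteq> V" "iswalk E xs"
      "\<forall>s\<le>m. sd V E {u} (xs ! s) = m - s"
      using geo_walk[OF r, of "{u}" m] u(1) m_def by auto
    have "dl m r u" using sd_ex[OF r, of "{u}"] u(1) m_def by auto
    then have mL: "4 * k < m" using u(2) dl_mono by (meson not_le less_imp_le_nat linorder_not_less)
    define P where "P = take (Suc (4 * k)) xs"
    have Pn: "P ! a = xs ! a" if "a \<le> 4 * k" for a unfolding P_def using that by simp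
    interpret PS V E D P k "4 * k" "k - 1"
    proof unfold_locales
      show "length P = Suc (4 * k)" unfolding P_def using xs(1) mL by simp
      show "iswalk E P" unfolding P_def using xs(4) unfolding iswalk_def by auto
      show "set P \<subseteq> V" unfolding P_def using xs(3) by (meson in_set_takeD subset_iff)
      show "k \<ge> 1" by (rule assms(1))
      show "4 * k = 4 * k" "k - 1 = k - 1" by simp_all
      fix a b n assume ab: "a \<le> 4 * k" "b \<le> 4 * k" "dl n (P ! a) (P ! b)"
      have "dl n (xs ! b) (xs ! a)" using ab Pn dl_sym by simp
      then have "sd V E {u} (xs ! b) \<le> n + sd V E {u} (xs ! a)" using sd_dl[of n _ _ "{u}"] u(1) by blast
      then have "m - b \<le> n + (m - a)" using xs(5) ab mL by simp
      then show "a - b \<le> n" using ab mL by simp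
    qed
    have col: "colourable V (graph_power V E k) (f_tree k D + 3 - k)" by (rule colour)
    have chi: "chromatic_number V (graph_power V E k) \<le> f_tree k D + 3 - k"
      unfolding chromatic_number_def using col by (rule Least_le)
    have "k \<le> f_tree k D"
    proof -
      have "k * D \<le> f_tree k D" using f_tree_ge[of D k] assms(2) by simp
      moreover have "k * 1 \<le> k * D" using assms(2) by (intro mult_le_mono2) simp
      ultimately show ?thesis by linarith
    qed
    then have "int (chromatic_number V (graph_power V E k)) \<le> int (f_tree k D) + 3 - int k"
      using chi by linarith
    then have "k_gap k V E \<ge> int k - 2" unfolding k_gap_def md by simp
    then show False using gap by simp
  qed
qed

end
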